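(* Let $f:\mathbb{R}\to\mathbb{R}$ be a function whose derivative $f'$ is eventually constant, i.e. there exist $t_-\le t_+$ in $\mathbb{R}$ such that $f'(t)=f'(t_-)$ for all $t\le t_-$ and $f'(t)=f'(t_+)$ for all $t\ge t_+$. Let $g(t)=\max(f(t),0)$. Then $$I(g') \le I(f').$$
   Context: Functions considered are continuous and differentiable except possibly at finitely many points; derivatives are taken where they exist, and $h(\infty)$, $h(-\infty)$ denote the limits of $h(t)$ as $t\to\pm\infty$. For $h:\mathbb{R}\to\mathbb{R}$ the total variation on $[a,b]$ is $V_a^b(h)=\sup_{T}\sum_{t_i\in T}|h(t_i)-h(t_{i-1})|$, the supremum over all partitions $T$ of $[a,b]$, and $V_{-\infty}^{\infty}$ is the corresponding total variation over the whole real line. The intrinsic variability of $h$ is $I(h) = V_{-\infty}^{\infty}(h) + |h(\infty)| + |h(-\infty)|$. *)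

theory Defs
  imports "HOL-Analysis.Analysis"
begin

definition deriv_dom :: "(real \<Rightarrow> real) \<Rightarrow> real set" where
  "deriv_dom f = {t. f differentiable (at t)}"

definition total_var :: "real set \<Rightarrow> (real \<Rightarrow> real) \<Rightarrow> ereal" where
  "total_var D h =
     (SUP xs \<in> {xs. sorted_wrt (<) xs \<and> set xs \<subseteq> D}.
        ereal (\<Sum>i < length xs - 1. \<bar>h (xs ! Suc i) - h (xs ! i)\<bar>))"

definition lim_pinf :: "real set \<Rightarrow> (real \<Rightarrow> real) \<Rightarrow> real" where
  "lim_pinf D h = Lim (inf at_top (principal D)) h"

definition lim_minf :: "real set \<Rightarrow> (real \<Rightarrow> real) \<Rightarrow> real" where
  "lim_minf D h = Lim (inf at_bot (principal D)) h"

text \<open>Intrinsic variability I(f') of the derivative f' of f, where f' is the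
  function deriv f on the set of points where f is differentiable:
  I(h) = V(h) + |h(inf)| + |h(-inf)|.\<close>
definition intrinsic_var_deriv :: "(real \<Rightarrow> real) \<Rightarrow> ereal" where
  "intrinsic_var_deriv f =
     total_var (deriv_dom f) (deriv f)
     + ereal \<bar>lim_pinf (deriv_dom f) (deriv f)\<bar>
     + ereal \<bar>lim_minf (deriv_dom f) (deriv f)\<bar>"

end

theory Submission
  imports Defs
begin


lemma pos_diff:
  fixes f :: "real \<Rightarrow> real"
  assumes cont: "continuous_on UNIV f" and pos: "f x > 0"
  shows "(\<lambda>t. max (f t) 0) differentiable (at x) \<longleftrightarrow> f differentiable (at x)"
    and "f differentiable (at x) \<Longrightarrow> deriv (\<lambda>t. max (f t) 0) x = deriv f x"
proof -
  let ?S = "f -` {0<..}"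
  have op: "open ?S" by (rule open_vimage[OF _ cont]) auto
  have xS: "x \<in> ?S" using pos by auto
  have eq: "\<And>y. y \<in> ?S \<Longrightarrow> f y = max (f y) 0" by auto
  show "(\<lambda>t. max (f t) 0) differentiable (at x) \<longleftrightarrow> f differentiable (at x)"
  proof
    assume "(\<lambda>t. max (f t) 0) differentiable (at x)"
    then obtain D where "((\<lambda>t. max (f t) 0) has_derivative D) (at x)" by (auto simp: differentiable_def)
    then have "(f has_derivative D) (at x)"
      by (rule has_derivative_transform_within_open[OF _ op xS]) auto
    then show "f differentiable (at x)" by (auto simp: differentiable_def)
  next
    assume "f differentiable (at x)"
    then obtain D where "(f has_derivative D) (at x)" by (auto simp: differentiable_def)
    then have "((\<lambda>t. max (f t) 0) has_derivative D) (at x)"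
      by (rule has_derivative_transform_within_open[OF _ op xS]) auto
    then show "(\<lambda>t. max (f t) 0) differentiable (at x)" by (auto simp: differentiable_def)
  qed
  assume "f differentiable (at x)"
  then have "DERIV f x :> deriv f x" by (simp add: DERIV_deriv_iff_real_differentiable)
  then have "DERIV (\<lambda>t. max (f t) 0) x :> deriv f x"
    by (rule has_field_derivative_transform_within_open[OF _ op xS]) auto
  then show "deriv (\<lambda>t. max (f t) 0) x = deriv f x" by (rule DERIV_imp_deriv)
qed

lemma zero_open_deriv:
  fixes g :: "real \<Rightarrow> real"
  assumes "open S" "x \<in> S" "\<And>y. y \<in> S \<Longrightarrow> g y = 0"
  shows "g differentiable (at x) \<and> deriv g x = 0"
proof -
  have "DERIV (\<lambda>t. 0) x :> 0" by simp
  then have "DERIV g x :> 0"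
    by (rule has_field_derivative_transform_within_open[OF _ assms(1,2)]) (simp add: assms(3))
  then show ?thesis using DERIV_imp_deriv real_differentiable_def by blast
qed

lemma nonpos_deriv:
  fixes f :: "real \<Rightarrow> real"
  assumes "(\<lambda>t. max (f t) 0) differentiable (at x)" "f x \<le> 0"
  shows "deriv (\<lambda>t. max (f t) 0) x = 0"
proof -
  have d: "DERIV (\<lambda>t. max (f t) 0) x :> deriv (\<lambda>t. max (f t) 0) x"
    using assms(1) by (simp add: DERIV_deriv_iff_real_differentiable)
  show ?thesis
    by (rule DERIV_local_min[OF d, of 1]) (use assms(2) in auto)
qed

lemma mvt_sign:
  fixes f :: "real \<Rightarrow> real"
  assumes cont: "continuous_on UNIV f" and fin: "finite {t. \<not> f differentiable (at t)}"
  shows "a < b \<Longrightarrow> f a \<noteq> f b \<Longrightarrow> \<exists>y. a < y \<and> y < b \<and> f differentiable (at y) \<and> (f b - f a) * deriv f y > 0"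
proof (induction "card ({t. \<not> f differentiable (at t)} \<inter> {a<..<b})" arbitrary: a b rule: less_induct)
  case less
  show ?case
  proof (cases "\<exists>c. a < c \<and> c < b \<and> \<not> f differentiable (at c)")
    case False
    then have "\<And>x. a < x \<Longrightarrow> x < b \<Longrightarrow> f differentiable (at x)" by blast
    from MVT[OF less(2) continuous_on_subset[OF cont] this]
    obtain l z where z: "a < z" "z < b" "DERIV f z :> l" "f b - f a = (b - a) * l" by auto
    have "l \<noteq> 0" using z(4) less(3) by auto
    then have ll: "l * l > 0" using not_real_square_gt_zero by blast
    have e: "(f b - f a) * l = (b - a) * (l * l)" by (simp add: z(4))
    have "(b - a) * (l * l) > 0" using ll less(2) by (metis mult_pos_pos diff_gt_0_iff_gt)
    then have "(f b - f a) * l > 0" by (simp only: e)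
    moreover have "deriv f z = l" using z(3) by (rule DERIV_imp_deriv)
    ultimately show ?thesis using z real_differentiable_def by blast
  next
    case True
    then obtain c where c: "a < c" "c < b" "\<not> f differentiable (at c)" by blast
    let ?B = "{t. \<not> f differentiable (at t)}"
    have fB: "finite (?B \<inter> {a<..<b})" using fin by auto
    have l1: "card (?B \<inter> {a<..<c}) < card (?B \<inter> {a<..<b})"
      by (rule psubset_card_mono[OF fB]) (use c in auto)
    have l2: "card (?B \<inter> {c<..<b}) < card (?B \<inter> {a<..<b})"
      by (rule psubset_card_mono[OF fB]) (use c in auto)
    show ?thesis
    proof (cases "(f c - f a) * (f b - f a) > 0")
      case True
      then have "f a \<noteq> f c" by auto
      from less(1)[OF l1 c(1) this] obtain y where y: "a < y" "y < c" "f differentiable (at y)" "(f c - f a) * deriv f y > 0" by blast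
      have "(f b - f a) * deriv f y > 0" using True y(4)
        by (auto simp: zero_less_mult_iff)
      then show ?thesis using y c by (intro exI[of _ y]) auto
    next
      case False
      have dd: "(f b - f a) * (f b - f a) > 0" using less(3) not_real_square_gt_zero by (metis right_minus_eq)
      have "(f c - f a) * (f b - f a) + (f b - f c) * (f b - f a) = (f b - f a) * (f b - f a)" by algebra
      then have F: "(f b - f c) * (f b - f a) > 0" using dd False by linarith
      then have "f c \<noteq> f b" by auto
      from less(1)[OF l2 c(2) this] obtain y where y: "c < y" "y < b" "f differentiable (at y)" "(f b - f c) * deriv f y > 0" by blast
      have "(f b - f a) * deriv f y > 0" using F y(4)
        by (auto simp: zero_less_mult_iff)
      then show ?thesis using y c by (intro exI[of _ y]) auto
    qed
  qed
qed


fun Rs :: "(real \<Rightarrow> real) \<Rightarrow> real list \<Rightarrow> real" where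
  "Rs h [] = 0"
| "Rs h [x] = \<bar>h x\<bar>"
| "Rs h (x # y # zs) = \<bar>h x - h y\<bar> + Rs h (y # zs)"

fun Ss :: "(real \<Rightarrow> real) \<Rightarrow> real list \<Rightarrow> real" where
  "Ss h (x # y # zs) = \<bar>h y - h x\<bar> + Ss h (y # zs)"
| "Ss h _ = 0"

lemma Ss_sum: "Ss h xs = (\<Sum>i<length xs - 1. \<bar>h (xs ! Suc i) - h (xs ! i)\<bar>)"
  by (induction h xs rule: Ss.induct) (simp_all add: sum.lessThan_Suc_shift del: sum.lessThan_Suc lessThan_Suc)

lemma Rs_Ss: "xs \<noteq> [] \<Longrightarrow> Rs h xs = Ss h xs + \<bar>h (last xs)\<bar>"
  by (induction h xs rule: Rs.induct) auto

lemma Ss_snoc: "xs \<noteq> [] \<Longrightarrow> Ss h (xs @ [z]) = Ss h xs + \<bar>h z - h (last xs)\<bar>"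
  by (induction h xs rule: Ss.induct) auto

lemma Ss_Cons: "xs \<noteq> [] \<Longrightarrow> Ss h (x # xs) = \<bar>h (hd xs) - h x\<bar> + Ss h xs"
  by (cases xs) auto

lemma Ss_nonneg: "Ss h xs \<ge> 0"
  by (induction h xs rule: Ss.induct) auto

lemma absineq1: "(r::real) < 0 \<Longrightarrow> 0 < s \<Longrightarrow> \<bar>p\<bar> + s \<le> \<bar>p - r\<bar> + \<bar>r - s\<bar>"
  by linarith

lemma absineq2: "(s::real) > 0 \<Longrightarrow> \<bar>q\<bar> \<le> s + \<bar>s - q\<bar>"
  by linarith

lemma main_ind:
  fixes f :: "real \<Rightarrow> real"
  assumes cont: "continuous_on UNIV f" and fin: "finite {t. \<not> f differentiable (at t)}"
  shows "xs \<noteq> [] \<Longrightarrow> sorted_wrt (<) xs \<Longrightarrow> set xs \<subseteq> deriv_dom (\<lambda>t. max (f t) 0) \<Longrightarrow>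
    \<exists>ys. sorted_wrt (<) ys \<and> set ys \<subseteq> deriv_dom f \<and> (\<forall>u\<in>set ys. hd xs \<le> u) \<and>
      (if f (hd xs) > 0 then ys \<noteq> [] \<and> hd ys = hd xs \<and> Rs (deriv (\<lambda>t. max (f t) 0)) xs \<le> Rs (deriv f) ys
       else (ys = [] \<and> Rs (deriv (\<lambda>t. max (f t) 0)) xs = 0) \<or>
            (ys \<noteq> [] \<and> deriv f (hd ys) > 0 \<and> Rs (deriv (\<lambda>t. max (f t) 0)) xs \<le> deriv f (hd ys) + Rs (deriv f) ys))"
proof (induction xs rule: induct_list012)
  case 1
  then show ?case by simp
next
  let ?g = "\<lambda>t. max (f t) 0"
  have FA: "x \<in> deriv_dom f \<and> deriv ?g x = deriv f x" if "x \<in> deriv_dom ?g" "f x > 0" for x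
    using pos_diff[OF cont that(2)] that(1) by (auto simp: deriv_dom_def)
  have FN: "deriv ?g x = 0" if "x \<in> deriv_dom ?g" "\<not> f x > 0" for x
    using nonpos_deriv[of f x] that by (auto simp: deriv_dom_def)
  {
    case (2 x)
    show ?case
    proof (cases "f x > 0")
      case True
      with FA 2 have "x \<in> deriv_dom f" "deriv ?g x = deriv f x" by auto
      then show ?thesis by (intro exI[of _ "[x]"]) (simp add: True)
    next
      case False
      with FN 2 have "deriv ?g x = 0" by auto
      then show ?thesis by (intro exI[of _ "[]"]) (simp add: False)
    qed
  next
    case (3 x y zs)
    from 3(4) have xy: "x < y" and s1: "sorted_wrt (<) (y # zs)" by auto
    from 3(5) have xg: "x \<in> deriv_dom ?g" and yg: "y \<in> deriv_dom ?g" and s2: "set (y # zs) \<subseteq> deriv_dom ?g" by auto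
    from 3(2)[OF _ s1 s2] obtain ys where ys: "sorted_wrt (<) ys" "set ys \<subseteq> deriv_dom f" "\<forall>u\<in>set ys. y \<le> u"
      and P: "if f y > 0 then ys \<noteq> [] \<and> hd ys = y \<and> Rs (deriv ?g) (y # zs) \<le> Rs (deriv f) ys
       else (ys = [] \<and> Rs (deriv ?g) (y # zs) = 0) \<or>
            (ys \<noteq> [] \<and> deriv f (hd ys) > 0 \<and> Rs (deriv ?g) (y # zs) \<le> deriv f (hd ys) + Rs (deriv f) ys)"
      by auto
    have xys: "\<forall>u\<in>set ys. x < u" using ys(3) xy by force
    have Rg: "Rs (deriv ?g) (x # y # zs) = \<bar>deriv ?g x - deriv ?g y\<bar> + Rs (deriv ?g) (y # zs)" by simp
    show ?case
    proof (cases "f x > 0")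
      case xA: True
      from FA[OF xg xA] have xf: "x \<in> deriv_dom f" "deriv ?g x = deriv f x" by auto
      show ?thesis
      proof (cases "f y > 0")
        case yA: True
        then have P': "ys \<noteq> []" "hd ys = y" "Rs (deriv ?g) (y # zs) \<le> Rs (deriv f) ys" using P by auto
        from FA[OF yg yA] have yf: "deriv ?g y = deriv f y" by auto
        obtain ys0 where ys0: "ys = y # ys0" using P' by (cases ys) auto
        show ?thesis
          by (rule exI[of _ "x # ys"]) (use ys ys0 P' xf yf xy xA Rg xys in auto)
      next
        case yN: False
        have gy0: "deriv ?g y = 0" using FN[OF yg yN] .
        from P yN have "(ys = [] \<and> Rs (deriv ?g) (y # zs) = 0) \<or>
            (ys \<noteq> [] \<and> deriv f (hd ys) > 0 \<and> Rs (deriv ?g) (y # zs) \<le> deriv f (hd ys) + Rs (deriv f) ys)"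
          by simp
        then show ?thesis
        proof
          assume "ys = [] \<and> Rs (deriv ?g) (y # zs) = 0"
          then show ?thesis by (intro exI[of _ "[x]"]) (use xf xA Rg gy0 in auto)
        next
          assume H: "ys \<noteq> [] \<and> deriv f (hd ys) > 0 \<and> Rs (deriv ?g) (y # zs) \<le> deriv f (hd ys) + Rs (deriv f) ys"
          have "f x \<noteq> f y" using xA yN by auto
          from mvt_sign[OF cont fin xy this] obtain r where r: "x < r" "r < y" "f differentiable (at r)"
            "(f y - f x) * deriv f r > 0" by blast
          have rneg: "deriv f r < 0" using r(4) xA yN by (auto simp: zero_less_mult_iff)
          obtain y0 ys0 where ys0: "ys = y0 # ys0" using H by (cases ys) auto
          have Rf: "Rs (deriv f) (x # r # ys) = \<bar>deriv f x - deriv f r\<bar> + (\<bar>deriv f r - deriv f y0\<bar> + Rs (deriv f) ys)"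
            by (simp add: ys0)
          have ineq: "\<bar>deriv f x\<bar> + deriv f y0 \<le> \<bar>deriv f x - deriv f r\<bar> + \<bar>deriv f r - deriv f y0\<bar>"
            by (rule absineq1) (use rneg H ys0 in auto)
          have sr: "sorted_wrt (<) (x # r # ys)" using ys(1) ys(3) r(1,2) by force
          have "Rs (deriv ?g) (x # y # zs) \<le> Rs (deriv f) (x # r # ys)"
            using Rg Rf ineq H gy0 xf ys0 by auto
          then show ?thesis
            by (intro exI[of _ "x # r # ys"]) (use sr xA xf r ys xys in \<open>auto simp: deriv_dom_def\<close>)
        qed
      qed
    next
      case xN: False
      have gx0: "deriv ?g x = 0" using FN[OF xg xN] .
      show ?thesis
      proof (cases "f y > 0")
        case yA: True
        then have P': "ys \<noteq> []" "hd ys = y" "Rs (deriv ?g) (y # zs) \<le> Rs (deriv f) ys" using P by auto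
        from FA[OF yg yA] have yf: "deriv ?g y = deriv f y" by auto
        obtain ys0 where ys0: "ys = y # ys0" using P' by (cases ys) auto
        have "f x \<noteq> f y" using xN yA by auto
        from mvt_sign[OF cont fin xy this] obtain s where s: "x < s" "s < y" "f differentiable (at s)"
          "(f y - f x) * deriv f s > 0" by blast
        have spos: "deriv f s > 0" using s(4) xN yA by (auto simp: zero_less_mult_iff)
        have Rf: "Rs (deriv f) (s # ys) = \<bar>deriv f s - deriv f y\<bar> + Rs (deriv f) ys"
          by (simp add: ys0)
        have ineq: "\<bar>deriv f y\<bar> \<le> deriv f s + \<bar>deriv f s - deriv f y\<bar>"
          by (rule absineq2) (rule spos)
        have sr: "sorted_wrt (<) (s # ys)" using ys(1) ys(3) s(2) by force
        have "Rs (deriv ?g) (x # y # zs) \<le> deriv f s + Rs (deriv f) (s # ys)"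
          using Rg Rf ineq P' gx0 yf by auto
        then show ?thesis
          by (intro exI[of _ "s # ys"]) (use sr xN spos s ys xys in \<open>auto simp: deriv_dom_def\<close>)
      next
        case yN: False
        have gy0: "deriv ?g y = 0" using FN[OF yg yN] .
        have "Rs (deriv ?g) (x # y # zs) = Rs (deriv ?g) (y # zs)" using Rg gx0 gy0 by simp
        then show ?thesis
          by (intro exI[of _ ys]) (use P yN xN ys xys in auto)
      qed
    qed
  }
qed


lemma lim_top_const:
  assumes "\<forall>x\<ge>T. x \<in> D \<and> h x = c"
  shows "lim_pinf D h = c"
proof -
  let ?F = "inf at_top (principal D)"
  have ev: "eventually (\<lambda>x. h x = c) ?F"
    unfolding eventually_inf_principal using eventually_ge_at_top[of T]
    by (rule eventually_mono) (use assms in auto)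
  have nt: "?F \<noteq> bot"
  proof
    assume "?F = bot"
    then have "eventually (\<lambda>x. False) ?F" by simp
    then have "eventually (\<lambda>x. x \<in> D \<longrightarrow> False) at_top" by (simp add: eventually_inf_principal)
    then obtain N where "\<forall>x\<ge>N. x \<notin> D" by (auto simp: eventually_at_top_linorder)
    then show False using assms by (meson max.cobounded1 max.cobounded2)
  qed
  show ?thesis unfolding lim_pinf_def
    by (rule tendsto_Lim) (use nt tendsto_eventually[OF ev] in auto)
qed

lemma lim_bot_const:
  assumes "\<forall>x\<le>T. x \<in> D \<and> h x = c"
  shows "lim_minf D h = c"
proof -
  let ?F = "inf at_bot (principal D)"
  have ev: "eventually (\<lambda>x. h x = c) ?F"
    unfolding eventually_inf_principal using eventually_le_at_bot[of T]
    by (rule eventually_mono) (use assms in auto)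
  have nt: "?F \<noteq> bot"
  proof
    assume "?F = bot"
    then have "eventually (\<lambda>x. False) ?F" by simp
    then have "eventually (\<lambda>x. x \<in> D \<longrightarrow> False) at_bot" by (simp add: eventually_inf_principal)
    then obtain N where "\<forall>x\<le>N. x \<notin> D" by (auto simp: eventually_at_bot_linorder)
    then show False using assms by (meson min.cobounded1 min.cobounded2)
  qed
  show ?thesis unfolding lim_minf_def
    by (rule tendsto_Lim) (use nt tendsto_eventually[OF ev] in auto)
qed

lemma right_affine:
  fixes f :: "real \<Rightarrow> real"
  assumes cont: "continuous_on UNIV f"
    and right: "\<And>t. t \<ge> tp \<Longrightarrow> f differentiable (at t) \<and> deriv f t = deriv f tp"
    and t: "t \<ge> tp"
  shows "f t = f tp + deriv f tp * (t - tp)"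
proof (cases "t = tp")
  case False
  then have lt: "tp < t" using t by auto
  from MVT[OF lt continuous_on_subset[OF cont]] right lt
  obtain l z where z: "tp < z" "z < t" "DERIV f z :> l" "f t - f tp = (t - tp) * l" by force
  have "l = deriv f tp" using DERIV_imp_deriv[OF z(3)] right[of z] z(1) by auto
  then show ?thesis using z(4) by (simp add: algebra_simps)
qed simp

lemma left_affine:
  fixes f :: "real \<Rightarrow> real"
  assumes cont: "continuous_on UNIV f"
    and left: "\<And>t. t \<le> tm \<Longrightarrow> f differentiable (at t) \<and> deriv f t = deriv f tm"
    and t: "t \<le> tm"
  shows "f t = f tm + deriv f tm * (t - tm)"
proof (cases "t = tm")
  case False
  then have lt: "t < tm" using t by auto
  from MVT[OF lt continuous_on_subset[OF cont]] left lt
  obtain l z where z: "t < z" "z < tm" "DERIV f z :> l" "f tm - f t = (tm - t) * l" by force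
  have "l = deriv f tm" using DERIV_imp_deriv[OF z(3)] left[of z] z(2) by auto
  then show ?thesis using z(4) by (simp add: algebra_simps)
qed simp




lemma lin_pos_right:
  fixes b c t0 :: real
  assumes b: "b > 0"
  shows "\<exists>T\<ge>t0. \<forall>x\<ge>T. c + b * (x - t0) > 0"
proof (intro exI[of _ "t0 + (\<bar>c\<bar> + 1) / b"] conjI allI impI)
  have D: "(\<bar>c\<bar> + 1) / b > 0" using b by (intro divide_pos_pos) auto
  then show "t0 \<le> t0 + (\<bar>c\<bar> + 1) / b" by simp
  fix x assume x: "t0 + (\<bar>c\<bar> + 1) / b \<le> x"
  then have "(\<bar>c\<bar> + 1) / b \<le> x - t0" by simp
  then have "b * ((\<bar>c\<bar> + 1) / b) \<le> b * (x - t0)" by (rule mult_left_mono) (use b in simp)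
  also have "b * ((\<bar>c\<bar> + 1) / b) = \<bar>c\<bar> + 1" using b by simp
  finally show "c + b * (x - t0) > 0" by linarith
qed

lemma lin_pos_left:
  fixes b c t0 :: real
  assumes b: "b > 0"
  shows "\<exists>T\<le>t0. \<forall>x\<le>T. c + b * (t0 - x) > 0"
proof (intro exI[of _ "t0 - (\<bar>c\<bar> + 1) / b"] conjI allI impI)
  have D: "(\<bar>c\<bar> + 1) / b > 0" using b by (intro divide_pos_pos) auto
  then show "t0 - (\<bar>c\<bar> + 1) / b \<le> t0" by simp
  fix x assume x: "x \<le> t0 - (\<bar>c\<bar> + 1) / b"
  then have "(\<bar>c\<bar> + 1) / b \<le> t0 - x" by simp
  then have "b * ((\<bar>c\<bar> + 1) / b) \<le> b * (t0 - x)" by (rule mult_left_mono) (use b in simp)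
  also have "b * ((\<bar>c\<bar> + 1) / b) = \<bar>c\<bar> + 1" using b by simp
  finally show "c + b * (t0 - x) > 0" by linarith
qed

lemma g_eventually:
  fixes f :: "real \<Rightarrow> real"
  assumes cont: "continuous_on UNIV f"
    and x: "f differentiable (at x)"
  shows "f x > 0 \<Longrightarrow> x \<in> deriv_dom (\<lambda>t. max (f t) 0) \<and> deriv (\<lambda>t. max (f t) 0) x = deriv f x"
    and "f x < 0 \<Longrightarrow> x \<in> deriv_dom (\<lambda>t. max (f t) 0) \<and> deriv (\<lambda>t. max (f t) 0) x = 0"
proof -
  assume "f x > 0"
  then show "x \<in> deriv_dom (\<lambda>t. max (f t) 0) \<and> deriv (\<lambda>t. max (f t) 0) x = deriv f x"
    using pos_diff[OF cont] x by (auto simp: deriv_dom_def)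
next
  assume neg: "f x < 0"
  have op: "open (f -` {..<0})" by (rule open_vimage[OF _ cont]) auto
  show "x \<in> deriv_dom (\<lambda>t. max (f t) 0) \<and> deriv (\<lambda>t. max (f t) 0) x = 0"
    using zero_open_deriv[OF op, of x "\<lambda>t. max (f t) 0"] neg by (auto simp: deriv_dom_def)
qed

lemma g_right:
  fixes f :: "real \<Rightarrow> real"
  assumes cont: "continuous_on UNIV f"
    and right: "\<And>t. t \<ge> tp \<Longrightarrow> f differentiable (at t) \<and> deriv f t = deriv f tp"
  shows "\<exists>T c. \<forall>x\<ge>T. x \<in> deriv_dom (\<lambda>t. max (f t) 0) \<and> deriv (\<lambda>t. max (f t) 0) x = c"
proof -
  let ?b = "deriv f tp" and ?c = "f tp"
  have aff: "\<And>t. t \<ge> tp \<Longrightarrow> f t = ?c + ?b * (t - tp)" using right_affine[OF cont right] by blast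
  have key: "(\<exists>T\<ge>tp. \<forall>x\<ge>T. f x > 0) \<or> (\<exists>T\<ge>tp. \<forall>x\<ge>T. f x < 0) \<or> (\<forall>x\<ge>tp. f x = 0)"
  proof -
    consider "?b > 0" | "?b < 0" | "?b = 0" by linarith
    then show ?thesis
    proof cases
      case 1
      from lin_pos_right[OF 1, of tp ?c] obtain T where T: "T \<ge> tp" "\<forall>x\<ge>T. ?c + ?b * (x - tp) > 0" by blast
      have "\<forall>x\<ge>T. f x > 0"
      proof (intro allI impI)
        fix x assume x: "x \<ge> T"
        then have "x \<ge> tp" using T(1) by linarith
        then have "f x = ?c + ?b * (x - tp)" by (rule aff)
        then show "f x > 0" using T(2) x by simp
      qed
      then show ?thesis using T(1) by blast
    next
      case 2
      then have nb: "- ?b > 0" by simp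
      from lin_pos_right[OF nb, of tp "- ?c"] obtain T where T: "T \<ge> tp" "\<forall>x\<ge>T. - ?c + (- ?b) * (x - tp) > 0" by blast
      have "\<forall>x\<ge>T. f x < 0"
      proof (intro allI impI)
        fix x assume x: "x \<ge> T"
        then have "x \<ge> tp" using T(1) by linarith
        then have "f x = ?c + ?b * (x - tp)" by (rule aff)
        moreover have "- ?c + (- ?b) * (x - tp) > 0" using T(2) x by simp
        ultimately show "f x < 0" by simp
      qed
      then show ?thesis using T(1) by blast
    next
      case 3
      have cc: "f x = ?c" if "x \<ge> tp" for x using aff[OF that] 3 by simp
      consider "?c > 0" | "?c < 0" | "?c = 0" by linarith
      then show ?thesis
      proof cases
        case 1
        have "\<forall>x\<ge>tp. f x > 0"
        proof (intro allI impI)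
          fix x assume "x \<ge> tp"
          show "f x > 0" using cc[OF \<open>x \<ge> tp\<close>] 1 by linarith
        qed
        then show ?thesis using order_refl by blast
      next
        case 2
        have "\<forall>x\<ge>tp. f x < 0"
        proof (intro allI impI)
          fix x assume "x \<ge> tp"
          show "f x < 0" using cc[OF \<open>x \<ge> tp\<close>] 2 by linarith
        qed
        then show ?thesis using order_refl by blast
      next
        case 3
        have "\<forall>x\<ge>tp. f x = 0"
        proof (intro allI impI)
          fix x assume "x \<ge> tp"
          show "f x = 0" using cc[OF \<open>x \<ge> tp\<close>] 3 by linarith
        qed
        then show ?thesis by blast
      qed
    qed
  qed
  then show ?thesis
  proof (elim disjE exE conjE)
    fix T assume T: "T \<ge> tp" "\<forall>x\<ge>T. f x > 0"
    show ?thesis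
    proof (rule exI[of _ T], rule exI[of _ "deriv f tp"], intro allI impI)
      fix x assume "x \<ge> T"
      then have "x \<ge> tp" using T(1) by linarith
      have r: "f differentiable (at x)" "deriv f x = deriv f tp" using right[OF \<open>x \<ge> tp\<close>] by auto
      show "x \<in> deriv_dom (\<lambda>t. max (f t) 0) \<and> deriv (\<lambda>t. max (f t) 0) x = deriv f tp"
        using g_eventually(1)[OF cont r(1)] T(2) \<open>x \<ge> T\<close> r(2) by auto
    qed
  next
    fix T assume T: "T \<ge> tp" "\<forall>x\<ge>T. f x < 0"
    show ?thesis
    proof (rule exI[of _ T], rule exI[of _ "0"], intro allI impI)
      fix x assume "x \<ge> T"
      then have "x \<ge> tp" using T(1) by linarith
      have r: "f differentiable (at x)" "deriv f x = deriv f tp" using right[OF \<open>x \<ge> tp\<close>] by auto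
      show "x \<in> deriv_dom (\<lambda>t. max (f t) 0) \<and> deriv (\<lambda>t. max (f t) 0) x = 0"
        using g_eventually(2)[OF cont r(1)] T(2) \<open>x \<ge> T\<close> r(2) by auto
    qed
  next
    assume Z: "\<forall>x\<ge>tp. f x = 0"
    have "\<forall>x\<ge>tp + 1. x \<in> deriv_dom (\<lambda>t. max (f t) 0) \<and> deriv (\<lambda>t. max (f t) 0) x = 0"
    proof (intro allI impI)
      fix x assume "x \<ge> tp + 1"
      have "(\<lambda>t. max (f t) 0) differentiable (at x) \<and> deriv (\<lambda>t. max (f t) 0) x = 0"
        by (rule zero_open_deriv[of "{tp<..}"]) (use Z \<open>x \<ge> tp + 1\<close> in auto)
      then show "x \<in> deriv_dom (\<lambda>t. max (f t) 0) \<and> deriv (\<lambda>t. max (f t) 0) x = 0"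
        by (simp add: deriv_dom_def)
    qed
    then show ?thesis by blast
  qed
qed

lemma g_left:
  fixes f :: "real \<Rightarrow> real"
  assumes cont: "continuous_on UNIV f"
    and left: "\<And>t. t \<le> tm \<Longrightarrow> f differentiable (at t) \<and> deriv f t = deriv f tm"
  shows "\<exists>T c. \<forall>x\<le>T. x \<in> deriv_dom (\<lambda>t. max (f t) 0) \<and> deriv (\<lambda>t. max (f t) 0) x = c"
proof -
  let ?b = "deriv f tm" and ?c = "f tm"
  have aff: "\<And>t. t \<le> tm \<Longrightarrow> f t = ?c + ?b * (t - tm)" using left_affine[OF cont left] by blast
  have key: "(\<exists>T\<le>tm. \<forall>x\<le>T. f x > 0) \<or> (\<exists>T\<le>tm. \<forall>x\<le>T. f x < 0) \<or> (\<forall>x\<le>tm. f x = 0)"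
  proof -
    consider "?b > 0" | "?b < 0" | "?b = 0" by linarith
    then show ?thesis
    proof cases
      case 1
      from lin_pos_left[OF 1, of tm "- ?c"] obtain T where T: "T \<le> tm" "\<forall>x\<le>T. - ?c + ?b * (tm - x) > 0" by blast
      have "\<forall>x\<le>T. f x < 0"
      proof (intro allI impI)
        fix x assume x: "x \<le> T"
        then have "x \<le> tm" using T(1) by linarith
        then have "f x = ?c + ?b * (x - tm)" by (rule aff)
        moreover have "?b * (x - tm) = - (?b * (tm - x))" by (simp add: algebra_simps)
        moreover have "- ?c + ?b * (tm - x) > 0" using T(2) x by simp
        ultimately show "f x < 0" by linarith
      qed
      then show ?thesis using T(1) by blast
    next
      case 2
      then have nb: "- ?b > 0" by simp
      from lin_pos_left[OF nb, of tm ?c] obtain T where T: "T \<le> tm" "\<forall>x\<le>T. ?c + (- ?b) * (tm - x) > 0" by blast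
      have "\<forall>x\<le>T. f x > 0"
      proof (intro allI impI)
        fix x assume x: "x \<le> T"
        then have "x \<le> tm" using T(1) by linarith
        then have "f x = ?c + ?b * (x - tm)" by (rule aff)
        moreover have "?b * (x - tm) = (- ?b) * (tm - x)" by (simp add: algebra_simps)
        moreover have "?c + (- ?b) * (tm - x) > 0" using T(2) x by simp
        ultimately show "f x > 0" by linarith
      qed
      then show ?thesis using T(1) by blast
    next
      case 3
      have cc: "f x = ?c" if "x \<le> tm" for x using aff[OF that] 3 by simp
      consider "?c > 0" | "?c < 0" | "?c = 0" by linarith
      then show ?thesis
      proof cases
        case 1
        have "\<forall>x\<le>tm. f x > 0"
        proof (intro allI impI)
          fix x assume "x \<le> tm"
          show "f x > 0" using cc[OF \<open>x \<le> tm\<close>] 1 by linarith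
        qed
        then show ?thesis using order_refl by blast
      next
        case 2
        have "\<forall>x\<le>tm. f x < 0"
        proof (intro allI impI)
          fix x assume "x \<le> tm"
          show "f x < 0" using cc[OF \<open>x \<le> tm\<close>] 2 by linarith
        qed
        then show ?thesis using order_refl by blast
      next
        case 3
        have "\<forall>x\<le>tm. f x = 0"
        proof (intro allI impI)
          fix x assume "x \<le> tm"
          show "f x = 0" using cc[OF \<open>x \<le> tm\<close>] 3 by linarith
        qed
        then show ?thesis by blast
      qed
    qed
  qed
  then show ?thesis
  proof (elim disjE exE conjE)
    fix T assume T: "T \<le> tm" "\<forall>x\<le>T. f x > 0"
    show ?thesis
    proof (rule exI[of _ T], rule exI[of _ "deriv f tm"], intro allI impI)
      fix x assume "x \<le> T"
      then have "x \<le> tm" using T(1) by linarith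
      have r: "f differentiable (at x)" "deriv f x = deriv f tm" using left[OF \<open>x \<le> tm\<close>] by auto
      show "x \<in> deriv_dom (\<lambda>t. max (f t) 0) \<and> deriv (\<lambda>t. max (f t) 0) x = deriv f tm"
        using g_eventually(1)[OF cont r(1)] T(2) \<open>x \<le> T\<close> r(2) by auto
    qed
  next
    fix T assume T: "T \<le> tm" "\<forall>x\<le>T. f x < 0"
    show ?thesis
    proof (rule exI[of _ T], rule exI[of _ "0"], intro allI impI)
      fix x assume "x \<le> T"
      then have "x \<le> tm" using T(1) by linarith
      have r: "f differentiable (at x)" "deriv f x = deriv f tm" using left[OF \<open>x \<le> tm\<close>] by auto
      show "x \<in> deriv_dom (\<lambda>t. max (f t) 0) \<and> deriv (\<lambda>t. max (f t) 0) x = 0"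
        using g_eventually(2)[OF cont r(1)] T(2) \<open>x \<le> T\<close> r(2) by auto
    qed
  next
    assume Z: "\<forall>x\<le>tm. f x = 0"
    have "\<forall>x\<le>tm - 1. x \<in> deriv_dom (\<lambda>t. max (f t) 0) \<and> deriv (\<lambda>t. max (f t) 0) x = 0"
    proof (intro allI impI)
      fix x assume "x \<le> tm - 1"
      have "(\<lambda>t. max (f t) 0) differentiable (at x) \<and> deriv (\<lambda>t. max (f t) 0) x = 0"
        by (rule zero_open_deriv[of "{..<tm}"]) (use Z \<open>x \<le> tm - 1\<close> in auto)
      then show "x \<in> deriv_dom (\<lambda>t. max (f t) 0) \<and> deriv (\<lambda>t. max (f t) 0) x = 0"
        by (simp add: deriv_dom_def)
    qed
    then show ?thesis by blast
  qed
qed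



lemma Ss_ext_mono: "Ss h xs \<le> Ss h (lo # xs @ [hi])"
proof (cases "xs = []")
  case True
  then show ?thesis by (simp add: Ss_nonneg)
next
  case False
  then show ?thesis by (simp add: Ss_Cons Ss_snoc Ss_nonneg)
qed

theorem lemma2:
  fixes f :: "real \<Rightarrow> real" and tm tp :: real
  assumes cont: "continuous_on UNIV f"
    and fin: "finite {t. \<not> f differentiable (at t)}"
    and tle: "tm \<le> tp"
    and left: "\<And>t. t \<le> tm \<Longrightarrow> f differentiable (at t) \<and> deriv f t = deriv f tm"
    and right: "\<And>t. t \<ge> tp \<Longrightarrow> f differentiable (at t) \<and> deriv f t = deriv f tp"
  shows "intrinsic_var_deriv (\<lambda>t. max (f t) 0) \<le> intrinsic_var_deriv f"
proof -
  let ?g = "\<lambda>t. max (f t) 0"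
  let ?Df = "deriv_dom f" and ?Dg = "deriv_dom ?g"
  let ?a = "deriv f tm" and ?b = "deriv f tp"
  obtain Tp cp where Rg: "\<forall>x\<ge>Tp. x \<in> ?Dg \<and> deriv ?g x = cp" using g_right[OF cont right] by blast
  obtain Tm cm where Lg: "\<forall>x\<le>Tm. x \<in> ?Dg \<and> deriv ?g x = cm" using g_left[OF cont left] by blast
  have Rf: "\<forall>x\<ge>tp. x \<in> ?Df \<and> deriv f x = ?b"
  proof (intro allI impI)
    fix x assume "x \<ge> tp"
    from right[OF this] show "x \<in> ?Df \<and> deriv f x = ?b" by (simp add: deriv_dom_def)
  qed
  have Lf: "\<forall>x\<le>tm. x \<in> ?Df \<and> deriv f x = ?a"
  proof (intro allI impI)
    fix x assume "x \<le> tm"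
    from left[OF this] show "x \<in> ?Df \<and> deriv f x = ?a" by (simp add: deriv_dom_def)
  qed
  have limf: "lim_pinf ?Df (deriv f) = ?b" "lim_minf ?Df (deriv f) = ?a"
    using lim_top_const[OF Rf] lim_bot_const[OF Lf] by auto
  have limg: "lim_pinf ?Dg (deriv ?g) = cp" "lim_minf ?Dg (deriv ?g) = cm"
    using lim_top_const[OF Rg] lim_bot_const[OF Lg] by auto
  have "(0::ereal) = ereal (\<Sum>i<length ([]::real list) - 1. \<bar>deriv f ([] ! Suc i) - deriv f ([] ! i)\<bar>)"
    by simp
  also have "\<dots> \<le> total_var ?Df (deriv f)"
    unfolding total_var_def by (rule SUP_upper) simp
  finally have V0: "total_var ?Df (deriv f) \<ge> 0" .
  show ?thesis
  proof (cases "total_var ?Df (deriv f) = \<infinity>")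
    case True
    then show ?thesis by (simp add: intrinsic_var_deriv_def)
  next
    case False
    then obtain v where v: "total_var ?Df (deriv f) = ereal v"
      using V0 by (cases "total_var ?Df (deriv f)") auto
    have v0: "v \<ge> 0" using V0 v by simp
    have partf: "Ss (deriv f) ys \<le> v" if "sorted_wrt (<) ys" "set ys \<subseteq> ?Df" for ys
    proof -
      have "ereal (\<Sum>i<length ys - 1. \<bar>deriv f (ys ! Suc i) - deriv f (ys ! i)\<bar>) \<le> total_var ?Df (deriv f)"
        unfolding total_var_def by (rule SUP_upper) (use that in auto)
      then show ?thesis using v by (simp add: Ss_sum)
    qed
    have AF: "\<bar>deriv f (hd ys)\<bar> + Rs (deriv f) ys \<le> v + \<bar>?a\<bar> + \<bar>?b\<bar>"
      if ys: "sorted_wrt (<) ys" "set ys \<subseteq> ?Df" "ys \<noteq> []" for ys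
    proof -
      define lo where "lo = min tm (Min (set ys)) - 1"
      define hi where "hi = max tp (Max (set ys)) + 1"
      have fs: "finite (set ys)" by simp
      have bnd: "\<forall>u\<in>set ys. lo < u \<and> u < hi"
      proof
        fix u assume u: "u \<in> set ys"
        have "min tm (Min (set ys)) \<le> Min (set ys)" "Min (set ys) \<le> u" using Min_le[OF fs u] by auto
        moreover have "max tp (Max (set ys)) \<ge> Max (set ys)" "Max (set ys) \<ge> u" using Max_ge[OF fs u] by auto
        ultimately show "lo < u \<and> u < hi" unfolding lo_def hi_def by linarith
      qed
      have lohi: "lo < hi" using bnd ys(3) by (cases ys) auto
      have srt: "sorted_wrt (<) (lo # ys @ [hi])" using ys(1) bnd lohi by (auto simp: sorted_wrt_append)
      have lo_tm: "lo \<le> tm" and hi_tp: "hi \<ge> tp" unfolding lo_def hi_def by auto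
      have loD: "lo \<in> ?Df" "deriv f lo = ?a" using Lf[rule_format, OF lo_tm] by auto
      have hiD: "hi \<in> ?Df" "deriv f hi = ?b" using Rf[rule_format, OF hi_tp] by auto
      have sub: "set (lo # ys @ [hi]) \<subseteq> ?Df" using ys(2) loD hiD by auto
      have "Ss (deriv f) (lo # ys @ [hi]) = \<bar>deriv f (hd ys) - deriv f lo\<bar> + (Ss (deriv f) ys + \<bar>deriv f hi - deriv f (last ys)\<bar>)"
        using ys(3) by (simp add: Ss_Cons Ss_snoc)
      moreover have "Ss (deriv f) (lo # ys @ [hi]) \<le> v" by (rule partf[OF srt sub])
      moreover have "Rs (deriv f) ys = Ss (deriv f) ys + \<bar>deriv f (last ys)\<bar>" by (rule Rs_Ss[OF ys(3)])
      ultimately show ?thesis using loD(2) hiD(2) by linarith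
    qed
    have Vg: "total_var ?Dg (deriv ?g) \<le> ereal (v + \<bar>?a\<bar> + \<bar>?b\<bar> - \<bar>cp\<bar> - \<bar>cm\<bar>)"
      unfolding total_var_def
    proof (rule SUP_least)
      fix xs assume "xs \<in> {xs. sorted_wrt (<) xs \<and> set xs \<subseteq> ?Dg}"
      then have xs: "sorted_wrt (<) xs" "set xs \<subseteq> ?Dg" by auto
      define lo where "lo = Min (insert Tm (insert Tp (set xs))) - 1"
      define hi where "hi = Max (insert Tm (insert Tp (set xs))) + 1"
      have fs: "finite (insert Tm (insert Tp (set xs)))" by simp
      have bnd: "\<forall>u\<in>set xs. lo < u \<and> u < hi"
      proof
        fix u assume u: "u \<in> set xs"
        then have "u \<in> insert Tm (insert Tp (set xs))" by simp
        then have "Min (insert Tm (insert Tp (set xs))) \<le> u" "Max (insert Tm (insert Tp (set xs))) \<ge> u"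
          using Min_le[OF fs] Max_ge[OF fs] by auto
        then show "lo < u \<and> u < hi" unfolding lo_def hi_def by linarith
      qed
      have lo_Tm: "lo \<le> Tm" using Min_le[OF fs, of Tm] unfolding lo_def by simp
      have hi_Tp: "hi \<ge> Tp" using Max_ge[OF fs, of Tp] unfolding hi_def by simp
      have Tm_hi: "Tm < hi" using Max_ge[OF fs, of Tm] unfolding hi_def by simp
      have lohi: "lo < hi" using lo_Tm Tm_hi by simp
      let ?e = "lo # xs @ [hi]"
      have srt: "sorted_wrt (<) ?e" using xs(1) bnd lohi by (auto simp: sorted_wrt_append)
      have loD: "lo \<in> ?Dg" "deriv ?g lo = cm" using Lg[rule_format, OF lo_Tm] by auto
      have hiD: "hi \<in> ?Dg" "deriv ?g hi = cp" using Rg[rule_format, OF hi_Tp] by auto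
      have sub: "set ?e \<subseteq> ?Dg" using xs(2) loD hiD by auto
      from main_ind[OF cont fin _ srt sub] obtain ys where
        ys: "sorted_wrt (<) ys" "set ys \<subseteq> ?Df" and
        P: "if f lo > 0 then ys \<noteq> [] \<and> hd ys = lo \<and> Rs (deriv ?g) ?e \<le> Rs (deriv f) ys
       else (ys = [] \<and> Rs (deriv ?g) ?e = 0) \<or>
            (ys \<noteq> [] \<and> deriv f (hd ys) > 0 \<and> Rs (deriv ?g) ?e \<le> deriv f (hd ys) + Rs (deriv f) ys)"
        by auto
      have anch: "\<bar>deriv ?g lo\<bar> + Rs (deriv ?g) ?e \<le> v + \<bar>?a\<bar> + \<bar>?b\<bar>"
      proof (cases "f lo > 0")
        case True
        then have P': "ys \<noteq> []" "hd ys = lo" "Rs (deriv ?g) ?e \<le> Rs (deriv f) ys" using P by auto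
        have "f differentiable (at lo)" using pos_diff(1)[OF cont True] loD(1) by (simp add: deriv_dom_def)
        then have "deriv ?g lo = deriv f lo" using pos_diff(2)[OF cont True] by simp
        then show ?thesis using AF[OF ys P'(1)] P' by simp
      next
        case False
        then have g0: "deriv ?g lo = 0" using nonpos_deriv[of f lo] loD(1) by (auto simp: deriv_dom_def)
        from P False have "(ys = [] \<and> Rs (deriv ?g) ?e = 0) \<or>
            (ys \<noteq> [] \<and> deriv f (hd ys) > 0 \<and> Rs (deriv ?g) ?e \<le> deriv f (hd ys) + Rs (deriv f) ys)"
          by simp
        then show ?thesis
        proof
          assume "ys = [] \<and> Rs (deriv ?g) ?e = 0"
          then show ?thesis using g0 v0 by simp
        next
          assume H: "ys \<noteq> [] \<and> deriv f (hd ys) > 0 \<and> Rs (deriv ?g) ?e \<le> deriv f (hd ys) + Rs (deriv f) ys"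
          then show ?thesis using AF[OF ys] g0 by auto
        qed
      qed
      have "Rs (deriv ?g) ?e = Ss (deriv ?g) ?e + \<bar>deriv ?g hi\<bar>" using Rs_Ss[of ?e "deriv ?g"] by simp
      moreover have "Ss (deriv ?g) xs \<le> Ss (deriv ?g) ?e" by (rule Ss_ext_mono)
      ultimately have "Ss (deriv ?g) xs \<le> v + \<bar>?a\<bar> + \<bar>?b\<bar> - \<bar>cp\<bar> - \<bar>cm\<bar>"
        using anch loD(2) hiD(2) by linarith
      then show "ereal (\<Sum>i<length xs - 1. \<bar>deriv ?g (xs ! Suc i) - deriv ?g (xs ! i)\<bar>)
          \<le> ereal (v + \<bar>?a\<bar> + \<bar>?b\<bar> - \<bar>cp\<bar> - \<bar>cm\<bar>)"
        by (simp add: Ss_sum)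
    qed
    have "intrinsic_var_deriv ?g = total_var ?Dg (deriv ?g) + ereal \<bar>cp\<bar> + ereal \<bar>cm\<bar>"
      by (simp add: intrinsic_var_deriv_def limg)
    also have "\<dots> \<le> ereal (v + \<bar>?a\<bar> + \<bar>?b\<bar> - \<bar>cp\<bar> - \<bar>cm\<bar>) + ereal \<bar>cp\<bar> + ereal \<bar>cm\<bar>"
      using Vg by (intro add_right_mono)
    also have "\<dots> = ereal v + ereal \<bar>?b\<bar> + ereal \<bar>?a\<bar>" by simp
    also have "\<dots> = intrinsic_var_deriv f" by (simp add: intrinsic_var_deriv_def limf v)
    finally show ?thesis .
  qed
qed

end
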